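(* Fix $p\in(\tfrac12,1)$. For each $n$ and $B\in\{1,\dots,n\}$ let $R(B,n)$ be the market penetration index of the crowdfunding game $\Gamma(B,n)$ (defined in the context). Then $$\lim_{n\to\infty}\ \max_{B\in\{1,\dots,n\}}R(B,n)=\frac{1}{2p}.$$
   Context: The crowdfunding game $\Gamma(B,n)$ with parameter $p\in(\tfrac12,1)$: there are $n$ players and a threshold $B\in\{1,\dots,n\}$. A state $\omega\in\{H,L\}$ is drawn with probability $\tfrac12$ each. Conditional on $\omega$, each player $i$ independently receives a signal $s_i\in\{H,L\}$ with $\Pr(s_i=\omega\mid\omega)=p$. Players simultaneously choose $a_i\in\{0,1\}$. Player $i$'s payoff is $1$ if $a_i=1$, $\sum_j a_j\ge B$ and $\omega=H$; $-1$ if $a_i=1$, $\sum_j a_j\ge B$ and $\omega=L$; and $0$ otherwise. A strategy is a map $\sigma_i:\{H,L\}\to[0,1]$ giving the probability of action $1$ after each signal; Bayes-Nash equilibrium is defined as usual. A profile is non-trivial if $\Pr_\sigma(\sum_i a_i\ge B)>0$, and symmetric if all players use the same strategy. It is known that each $\Gamma(B,n)$ has a unique symmetric non-trivial Bayes-Nash equilibrium $\sigma$. The market penetration index is $R(B,n)=E_\sigma\big[\tfrac{1}{n}\big(\sum_{i=1}^n a_i\big)\,\chi\big(\sum_{i=1}^n a_i\ge B\big)\big]$, where $\chi$ is the indicator function and the expectation is under this unique equilibrium $\sigma$ (including the randomness of $\omega$ and the signals). *)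

theory Defs
  imports Complex_Main "HOL-Library.FuncSet"
begin

text \<open>Crowdfunding game Gamma(B,n) with signal precision p.
  States and signals are encoded as bool: True = H, False = L.
  Players are 0,...,n-1. A (mixed) strategy maps a signal to the
  probability of playing action 1.\<close>

type_synonym strategy = "bool \<Rightarrow> real"

definition valid_strategy :: "strategy \<Rightarrow> bool" where
  "valid_strategy \<sigma> \<longleftrightarrow> (\<forall>s. 0 \<le> \<sigma> s \<and> \<sigma> s \<le> 1)"

definition profiles :: "nat \<Rightarrow> (nat \<Rightarrow> bool) set" where
  "profiles n = Pi\<^sub>E {..<n} (\<lambda>_. UNIV)"

definition outcome_prob ::
  "real \<Rightarrow> nat \<Rightarrow> (nat \<Rightarrow> strategy) \<Rightarrow> bool \<Rightarrow> (nat \<Rightarrow> bool) \<Rightarrow> (nat \<Rightarrow> bool) \<Rightarrow> real" where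
  "outcome_prob p n sig w s a =
     1/2 * (\<Prod>i<n. if s i = w then p else 1 - p)
         * (\<Prod>i<n. if a i then sig i (s i) else 1 - sig i (s i))"

definition expect ::
  "real \<Rightarrow> nat \<Rightarrow> (nat \<Rightarrow> strategy) \<Rightarrow> (bool \<Rightarrow> (nat \<Rightarrow> bool) \<Rightarrow> (nat \<Rightarrow> bool) \<Rightarrow> real) \<Rightarrow> real" where
  "expect p n sig f =
     (\<Sum>w\<in>(UNIV::bool set). \<Sum>s\<in>profiles n. \<Sum>a\<in>profiles n. outcome_prob p n sig w s a * f w s a)"

definition num_act :: "nat \<Rightarrow> (nat \<Rightarrow> bool) \<Rightarrow> nat" where
  "num_act n a = card {i. i < n \<and> a i}"

definition payoff :: "nat \<Rightarrow> nat \<Rightarrow> nat \<Rightarrow> bool \<Rightarrow> (nat \<Rightarrow> bool) \<Rightarrow> real" where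
  "payoff B n i w a =
     (if a i \<and> B \<le> num_act n a then (if w then 1 else -1) else 0)"

text \<open>Bayes-Nash equilibrium (ex-ante formulation; since every signal has
  positive probability, this is equivalent to interim optimality).\<close>
definition is_BNE :: "real \<Rightarrow> nat \<Rightarrow> nat \<Rightarrow> (nat \<Rightarrow> strategy) \<Rightarrow> bool" where
  "is_BNE p B n sig \<longleftrightarrow>
     (\<forall>i<n. valid_strategy (sig i)) \<and>
     (\<forall>i<n. \<forall>\<tau>. valid_strategy \<tau> \<longrightarrow>
        expect p n (sig(i := \<tau>)) (\<lambda>w s a. payoff B n i w a)
          \<le> expect p n sig (\<lambda>w s a. payoff B n i w a))"

definition nontrivial :: "real \<Rightarrow> nat \<Rightarrow> nat \<Rightarrow> (nat \<Rightarrow> strategy) \<Rightarrow> bool" where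
  "nontrivial p B n sig \<longleftrightarrow>
     expect p n sig (\<lambda>w s a. if B \<le> num_act n a then 1 else 0) > 0"

text \<open>The unique symmetric non-trivial BNE (all players use the same strategy).\<close>
definition sym_eq :: "real \<Rightarrow> nat \<Rightarrow> nat \<Rightarrow> strategy" where
  "sym_eq p B n = (THE \<tau>. valid_strategy \<tau> \<and> is_BNE p B n (\<lambda>_. \<tau>) \<and> nontrivial p B n (\<lambda>_. \<tau>))"

definition R :: "real \<Rightarrow> nat \<Rightarrow> nat \<Rightarrow> real" where
  "R p B n = expect p n (\<lambda>_. sym_eq p B n)
     (\<lambda>w s a. real (num_act n a) / real n * (if B \<le> num_act n a then 1 else 0))"

end

theory Submission
  imports Defs
begin

definition bsum :: "nat \<Rightarrow> real \<Rightarrow> real \<Rightarrow> (nat \<Rightarrow> real) \<Rightarrow> real" where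
  "bsum m x y h = (\<Sum>k\<le>m. real (m choose k) * x^k * y^(m-k) * h k)"

lemma bsum_0[simp]: "bsum 0 x y h = h 0"
  by (simp add: bsum_def)

lemma bsum_Suc: "bsum (Suc m) x y h = x * bsum m x y (\<lambda>k. h (Suc k)) + y * bsum m x y h"
proof -
  define A where "A k = real (m choose k) * x^k * y^(Suc m - k) * h k" for k
  define Bt where "Bt k = (if k = 0 then 0 else real (m choose (k-1)) * x^k * y^(Suc m - k) * h k)" for k
  have 1: "y * bsum m x y h = (\<Sum>k\<le>Suc m. A k)"
  proof -
    have "y * bsum m x y h = (\<Sum>k\<le>m. A k)"
      unfolding bsum_def A_def sum_distrib_left
      by (rule sum.cong) (auto simp: Suc_diff_le mult_ac)
    also have "\<dots> = (\<Sum>k\<le>Suc m. A k)" by (simp add: A_def)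
    finally show ?thesis .
  qed
  have 2: "x * bsum m x y (\<lambda>k. h (Suc k)) = (\<Sum>k\<le>Suc m. Bt k)"
  proof -
    have "x * bsum m x y (\<lambda>k. h (Suc k)) = (\<Sum>k\<le>m. Bt (Suc k))"
      unfolding bsum_def Bt_def sum_distrib_left
      by (rule sum.cong) (auto simp: mult_ac)
    also have "\<dots> = (\<Sum>k\<le>Suc m. Bt k)" by (subst sum.atMost_Suc_shift) (simp add: Bt_def)
    finally show ?thesis .
  qed
  have 3: "bsum (Suc m) x y h = (\<Sum>k\<le>Suc m. A k + Bt k)"
    unfolding bsum_def
  proof (rule sum.cong[OF refl])
    fix k assume "k \<in> {..Suc m}"
    show "real (Suc m choose k) * x ^ k * y ^ (Suc m - k) * h k = A k + Bt k"
    proof (cases k)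
      case 0 then show ?thesis by (simp add: A_def Bt_def)
    next
      case (Suc j) then show ?thesis by (simp add: A_def Bt_def algebra_simps)
    qed
  qed
  show ?thesis using 1 2 3 by (simp add: sum.distrib)
qed

lemma bsum_cong: "(\<And>k. k \<le> m \<Longrightarrow> h k = g k) \<Longrightarrow> bsum m x y h = bsum m x y g"
  unfolding bsum_def by (rule sum.cong) auto

lemma bsum_cmult: "bsum m x y (\<lambda>k. c * h k) = c * bsum m x y h"
  unfolding bsum_def sum_distrib_left by (rule sum.cong) auto

lemma bsum_add: "bsum m x y (\<lambda>k. h k + g k) = bsum m x y h + bsum m x y g"
  unfolding bsum_def by (simp add: distrib_left sum.distrib)

lemma bsum_diff: "bsum m x y (\<lambda>k. h k - g k) = bsum m x y h - bsum m x y g"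
  unfolding bsum_def by (simp add: right_diff_distrib sum_subtractf)

lemma bsum_one: "x + y = 1 \<Longrightarrow> bsum m x y (\<lambda>_. 1) = 1"
  by (induction m) (simp_all add: bsum_Suc)

lemma bsum_const: "x + y = 1 \<Longrightarrow> bsum m x y (\<lambda>_. c) = c"
  using bsum_cmult[of m x y c "\<lambda>_. 1"] bsum_one[of x y m] by simp

lemma bsum_mean: "bsum m x (1-x) (\<lambda>k. real k) = real m * x"
proof (induction m)
  case 0 then show ?case by simp
next
  case (Suc m)
  have "bsum (Suc m) x (1-x) real = x * bsum m x (1-x) (\<lambda>k. 1 + real k) + (1-x) * bsum m x (1-x) real"
    by (simp add: bsum_Suc)
  also have "bsum m x (1-x) (\<lambda>k. 1 + real k) = real m * x + 1"
    using bsum_add[of m x "1-x" "\<lambda>_. 1" real] Suc bsum_one[of x "1-x" m] by (simp add: add.commute)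
  finally show ?case using Suc by (simp add: algebra_simps)
qed

lemma bsum_sq: "bsum m x (1-x) (\<lambda>k. (real k)^2) = real m * x + real m * (real m - 1) * x^2"
proof (induction m)
  case 0 then show ?case by simp
next
  case (Suc m)
  have "bsum (Suc m) x (1-x) (\<lambda>k. (real k)^2) = x * bsum m x (1-x) (\<lambda>k. (real k)^2 + (2 * real k + 1)) + (1-x) * bsum m x (1-x) (\<lambda>k. (real k)^2)"
    by (simp add: bsum_Suc power2_eq_square algebra_simps)
  also have "bsum m x (1-x) (\<lambda>k. (real k)^2 + (2 * real k + 1)) = bsum m x (1-x) (\<lambda>k. (real k)^2) + (2 * (real m * x) + 1)"
    using bsum_add[of m x "1-x" "\<lambda>k. (real k)^2" "\<lambda>k. 2 * real k + 1"]
      bsum_add[of m x "1-x" "\<lambda>k. 2 * real k" "\<lambda>_. 1"] bsum_cmult[of m x "1-x" 2 real]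
      bsum_mean[of m x] bsum_one[of x "1-x" m] by simp
  also have "\<dots> = real m * x + real m * (real m - 1) * x^2 + (2 * (real m * x) + 1)"
    using Suc.IH by simp
  finally have "bsum (Suc m) x (1-x) (\<lambda>k. (real k)^2) = x * (real m * x + real m * (real m - 1) * x^2 + (2 * (real m * x) + 1)) + (1-x) * (real m * x + real m * (real m - 1) * x^2)"
    using Suc.IH by simp
  then show ?case by (simp add: algebra_simps power2_eq_square)
qed

lemma bsum_var: "bsum m x (1-x) (\<lambda>k. (real k - real m * x)^2) = real m * x * (1 - x)"
proof -
  have "(\<lambda>k. (real k - real m * x)^2) = (\<lambda>k. (real k)^2 - (2 * real m * x) * real k + (real m * x)^2)"
    by (simp add: power2_eq_square algebra_simps)
  then have "bsum m x (1-x) (\<lambda>k. (real k - real m * x)^2) = bsum m x (1-x) (\<lambda>k. (real k)^2) - (2 * real m * x) * bsum m x (1-x) real + (real m * x)^2"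
    using bsum_add[of m x "1-x" "\<lambda>k. (real k)^2 - (2 * real m * x) * real k" "\<lambda>_. (real m * x)^2"]
      bsum_diff[of m x "1-x" "\<lambda>k. (real k)^2" "\<lambda>k. (2 * real m * x) * real k"]
      bsum_cmult[of m x "1-x" "2 * real m * x" real] bsum_const[of x "1-x" m] by simp
  also have "\<dots> = real m * x * (1 - x)"
    unfolding bsum_sq bsum_mean by (simp add: power2_eq_square algebra_simps)
  finally show ?thesis .
qed

lemma bsum_k: "bsum (Suc m) x y (\<lambda>k. real k * h k) = real (Suc m) * x * bsum m x y (\<lambda>k. h (Suc k))"
proof (induction m arbitrary: h)
  case 0 then show ?case by (simp add: bsum_Suc)
next
  case (Suc m)
  have "bsum (Suc (Suc m)) x y (\<lambda>k. real k * h k) =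
     x * bsum (Suc m) x y (\<lambda>k. h (Suc k) + real k * h (Suc k)) + y * bsum (Suc m) x y (\<lambda>k. real k * h k)"
    by (simp add: bsum_Suc algebra_simps)
  also have "\<dots> = x * bsum (Suc m) x y (\<lambda>k. h (Suc k)) + x * (real (Suc m) * x * bsum m x y (\<lambda>k. h (Suc (Suc k))))
      + y * (real (Suc m) * x * bsum m x y (\<lambda>k. h (Suc k)))"
    using Suc[of "\<lambda>k. h (Suc k)"] Suc[of h] by (simp add: bsum_add distrib_left)
  also have "\<dots> = real (Suc (Suc m)) * x * bsum (Suc m) x y (\<lambda>k. h (Suc k))"
    by (simp add: bsum_Suc algebra_simps)
  finally show ?case .
qed

lemma bsum_nonneg: "0 \<le> x \<Longrightarrow> 0 \<le> y \<Longrightarrow> (\<And>k. k \<le> m \<Longrightarrow> 0 \<le> h k) \<Longrightarrow> 0 \<le> bsum m x y h"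
  unfolding bsum_def by (intro sum_nonneg) auto

lemma bsum_mono: "0 \<le> x \<Longrightarrow> 0 \<le> y \<Longrightarrow> (\<And>k. k \<le> m \<Longrightarrow> h k \<le> g k) \<Longrightarrow> bsum m x y h \<le> bsum m x y g"
  unfolding bsum_def by (intro sum_mono mult_left_mono) auto

lemma sum_PiE_insert:
  assumes "x \<notin> I"
  shows "(\<Sum>a\<in>PiE (insert x I) B. G a) = (\<Sum>y\<in>B x. \<Sum>g\<in>PiE I B. G (g(x := y)))"
proof -
  have "(\<Sum>a\<in>PiE (insert x I) B. G a) = (\<Sum>(y,g)\<in>B x \<times> PiE I B. G (g(x := y)))"
    using assms
    by (intro sum.reindex_bij_witness[of _ "\<lambda>(y,g). g(x := y)" "\<lambda>g. (g x, g(x := undefined))"])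
       (auto simp: PiE_def extensional_def)
  also have "\<dots> = (\<Sum>y\<in>B x. \<Sum>g\<in>PiE I B. G (g(x := y)))"
    by (subst sum.cartesian_product) auto
  finally show ?thesis .
qed

lemma cnt_insert:
  assumes "x \<notin> I" "finite I"
  shows "card {j\<in>insert x I. (g(x := y)) j} = card {j\<in>I. g j} + (if y then 1 else 0)"
proof -
  have "{j\<in>insert x I. (g(x := y)) j} = (if y then insert x {j\<in>I. g j} else {j\<in>I. g j})"
    using assms by auto
  then show ?thesis using assms by auto
qed

lemma prod_insert_upd:
  assumes "x \<notin> I" "finite I"
  shows "(\<Prod>j\<in>insert x I. c j ((g(x := y)) j)) = c x y * (\<Prod>j\<in>I. c j (g j))"
proof -
  have "(\<Prod>j\<in>I. c j ((g(x := y)) j)) = (\<Prod>j\<in>I. c j (g j))"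
    using assms by (intro prod.cong) auto
  then show ?thesis using assms by simp
qed

lemma cnt_bin:
  assumes "finite I"
  shows "(\<Sum>a\<in>PiE I (\<lambda>_. UNIV::bool set). (\<Prod>j\<in>I. c (a j)) * h (card {j\<in>I. a j}))
         = bsum (card I) (c True) (c False) h"
  using assms
proof (induction I arbitrary: h rule: finite_induct)
  case empty
  then show ?case by simp
next
  case (insert x I)
  have "(\<Sum>a\<in>PiE (insert x I) (\<lambda>_. UNIV::bool set). (\<Prod>j\<in>insert x I. c (a j)) * h (card {j\<in>insert x I. a j}))
     = (\<Sum>y\<in>UNIV. \<Sum>g\<in>PiE I (\<lambda>_. UNIV::bool set). c y * ((\<Prod>j\<in>I. c (g j)) * h (card {j\<in>I. g j} + (if y then 1 else 0))))"
  proof -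
    have eq: "(\<Prod>j\<in>insert x I. c ((g(x:=y)) j)) * h (card {j\<in>insert x I. (g(x:=y)) j})
      = c y * ((\<Prod>j\<in>I. c (g j)) * h (card {j\<in>I. g j} + (if y then 1 else 0)))" for g y
      using prod_insert_upd[OF insert.hyps(2,1), of "\<lambda>_. c" g y] cnt_insert[OF insert.hyps(2,1), of g y]
      by (simp only: mult.assoc)
    show ?thesis by (simp only: sum_PiE_insert[OF insert.hyps(2)] eq)
  qed
  also have "\<dots> = c True * bsum (card I) (c True) (c False) (\<lambda>k. h (Suc k)) + c False * bsum (card I) (c True) (c False) h"
    using insert.IH[of "\<lambda>k. h (Suc k)"] insert.IH[of h]
    by (simp add: UNIV_bool sum_distrib_left[symmetric])
  also have "\<dots> = bsum (card (insert x I)) (c True) (c False) h"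
    using insert.hyps by (simp add: bsum_Suc)
  finally show ?case .
qed

lemma dev_sum:
  assumes "finite J" "i \<notin> J" "\<And>j. j \<in> J \<Longrightarrow> c j = cz"
  shows "(\<Sum>a\<in>PiE (insert i J) (\<lambda>_. UNIV::bool set). (\<Prod>j\<in>insert i J. c j (a j)) * H (a i) (card {j\<in>insert i J. a j}))
   = (\<Sum>b\<in>UNIV. c i b * bsum (card J) (cz True) (cz False) (\<lambda>k. H b (k + (if b then 1 else 0))))"
proof -
  have "(\<Sum>a\<in>PiE (insert i J) (\<lambda>_. UNIV::bool set). (\<Prod>j\<in>insert i J. c j (a j)) * H (a i) (card {j\<in>insert i J. a j}))
    = (\<Sum>b\<in>UNIV. \<Sum>g\<in>PiE J (\<lambda>_. UNIV::bool set). c i b * ((\<Prod>j\<in>J. cz (g j)) * H b (card {j\<in>J. g j} + (if b then 1 else 0))))"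
  proof -
    have eq: "(\<Prod>j\<in>insert i J. c j ((g(i:=y)) j)) * H ((g(i:=y)) i) (card {j\<in>insert i J. (g(i:=y)) j})
      = c i y * ((\<Prod>j\<in>J. cz (g j)) * H y (card {j\<in>J. g j} + (if y then 1 else 0)))" for g y
    proof -
      have "(\<Prod>j\<in>J. c j (g j)) = (\<Prod>j\<in>J. cz (g j))" using assms(3) by (intro prod.cong) auto
      then show ?thesis
        using prod_insert_upd[OF assms(2,1), of c g y] cnt_insert[OF assms(2,1), of g y]
        by (simp only: mult.assoc fun_upd_same)
    qed
    show ?thesis by (simp only: sum_PiE_insert[OF assms(2)] eq)
  qed
  also have "\<dots> = (\<Sum>b\<in>UNIV. c i b * bsum (card J) (cz True) (cz False) (\<lambda>k. H b (k + (if b then 1 else 0))))"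
    using assms(1)
    by (simp add: sum_distrib_left[symmetric] cnt_bin[where h="\<lambda>k. H _ (k + _)"])
  finally show ?thesis .
qed

definition cc :: "real \<Rightarrow> strategy \<Rightarrow> bool \<Rightarrow> bool \<Rightarrow> real" where
  "cc p \<sigma> w b = (\<Sum>t\<in>UNIV. (if t = w then p else 1 - p) * (if b then \<sigma> t else 1 - \<sigma> t))"

definition qq :: "real \<Rightarrow> strategy \<Rightarrow> bool \<Rightarrow> real" where
  "qq p \<sigma> w = (if w then p * \<sigma> True + (1-p) * \<sigma> False else (1-p) * \<sigma> True + p * \<sigma> False)"

lemma sum_bool: "(\<Sum>w\<in>(UNIV::bool set). f w) = f True + f False"
  by (simp add: UNIV_bool add.commute)

lemma cc_True: "cc p \<sigma> w True = qq p \<sigma> w"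
  by (cases w) (simp_all add: cc_def qq_def UNIV_bool)

lemma cc_False: "cc p \<sigma> w False = 1 - qq p \<sigma> w"
  by (cases w) (simp_all add: cc_def qq_def UNIV_bool algebra_simps)

lemma num_act_eq: "num_act n a = card {j\<in>{..<n}. a j}"
  unfolding num_act_def by (simp add: lessThan_def)

lemma expect_g:
  "expect p n sig (\<lambda>w s a. g w a) =
     (\<Sum>w\<in>UNIV. 1/2 * (\<Sum>a\<in>profiles n. (\<Prod>j<n. cc p (sig j) w (a j)) * g w a))"
proof -
  have "(\<Sum>s\<in>profiles n. \<Sum>a\<in>profiles n. outcome_prob p n sig w s a * g w a)
      = 1/2 * (\<Sum>a\<in>profiles n. (\<Prod>j<n. cc p (sig j) w (a j)) * g w a)" for w
  proof -
    have "(\<Sum>s\<in>profiles n. \<Sum>a\<in>profiles n. outcome_prob p n sig w s a * g w a)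
        = (\<Sum>a\<in>profiles n. \<Sum>s\<in>profiles n. outcome_prob p n sig w s a * g w a)"
      by (rule sum.swap)
    also have "\<dots> = (\<Sum>a\<in>profiles n. 1/2 * g w a * (\<Sum>s\<in>profiles n. \<Prod>j<n.
          (if s j = w then p else 1 - p) * (if a j then sig j (s j) else 1 - sig j (s j))))"
      unfolding outcome_prob_def sum_distrib_left
      by (intro sum.cong refl) (simp add: prod.distrib mult_ac)
    also have "\<dots> = (\<Sum>a\<in>profiles n. 1/2 * g w a * (\<Prod>j<n. cc p (sig j) w (a j)))"
      unfolding profiles_def cc_def
      by (intro sum.cong refl arg_cong[where f="\<lambda>x. 1/2 * g w _ * x"])
         (rule prod_sum_PiE[symmetric, where f="\<lambda>j t. (if t = w then p else 1 - p) * (if _ j then sig j t else 1 - sig j t)"]; simp)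
    finally show ?thesis by (simp add: sum_distrib_left mult_ac)
  qed
  note eqw = this
  show ?thesis unfolding expect_def by (simp only: eqw)
qed

lemma expect_sym:
  "expect p n (\<lambda>_. \<sigma>) (\<lambda>w s a. h (num_act n a)) =
     1/2 * (bsum n (qq p \<sigma> True) (1 - qq p \<sigma> True) h + bsum n (qq p \<sigma> False) (1 - qq p \<sigma> False) h)"
proof -
  have "(\<Sum>a\<in>profiles n. (\<Prod>j<n. cc p \<sigma> w (a j)) * h (num_act n a)) = bsum n (qq p \<sigma> w) (1 - qq p \<sigma> w) h" for w
    using cnt_bin[of "{..<n}" "cc p \<sigma> w" h]
    by (simp add: profiles_def num_act_eq cc_True cc_False)
  then show ?thesis
    by (simp add: expect_g[where g="\<lambda>w a. h (num_act n a)"] UNIV_bool algebra_simps)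
qed

definition Tt :: "nat \<Rightarrow> nat \<Rightarrow> real \<Rightarrow> real" where
  "Tt m B q = bsum m q (1 - q) (\<lambda>k. if B \<le> Suc k then 1 else 0)"

definition AH :: "real \<Rightarrow> nat \<Rightarrow> nat \<Rightarrow> strategy \<Rightarrow> real" where
  "AH p B n \<sigma> = 1/2 * (p * Tt (n-1) B (qq p \<sigma> True) - (1-p) * Tt (n-1) B (qq p \<sigma> False))"

definition AL :: "real \<Rightarrow> nat \<Rightarrow> nat \<Rightarrow> strategy \<Rightarrow> real" where
  "AL p B n \<sigma> = 1/2 * ((1-p) * Tt (n-1) B (qq p \<sigma> True) - p * Tt (n-1) B (qq p \<sigma> False))"

lemma expect_dev:
  assumes "i < n"
  shows "expect p n ((\<lambda>_. \<sigma>)(i := \<tau>)) (\<lambda>w s a. payoff B n i w a) = \<tau> True * AH p B n \<sigma> + \<tau> False * AL p B n \<sigma>"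
proof -
  define J where "J = {..<n} - {i}"
  have IJ: "{..<n} = insert i J" "i \<notin> J" "finite J" "card J = n - 1"
    using assms by (auto simp: J_def)
  have "(\<Sum>a\<in>profiles n. (\<Prod>j<n. cc p (((\<lambda>_. \<sigma>)(i := \<tau>)) j) w (a j)) * payoff B n i w a)
     = cc p \<tau> w True * (if w then 1 else -1) * Tt (n-1) B (qq p \<sigma> w)" for w
  proof -
    have "(\<Sum>a\<in>profiles n. (\<Prod>j<n. cc p (((\<lambda>_. \<sigma>)(i := \<tau>)) j) w (a j)) * payoff B n i w a)
      = (\<Sum>a\<in>PiE (insert i J) (\<lambda>_. UNIV::bool set). (\<Prod>j\<in>insert i J. (\<lambda>j. cc p (((\<lambda>_. \<sigma>)(i := \<tau>)) j) w) j (a j))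
            * (\<lambda>b k. if b \<and> B \<le> k then (if w then 1 else -1) else 0) (a i) (card {j\<in>insert i J. a j}))"
      unfolding profiles_def payoff_def num_act_eq IJ(1) by simp
    also have "\<dots> = (\<Sum>b\<in>UNIV. cc p \<tau> w b * bsum (card J) (cc p \<sigma> w True) (cc p \<sigma> w False)
         (\<lambda>k. (\<lambda>b k. if b \<and> B \<le> k then (if w then 1 else -1) else 0) b (k + (if b then 1 else 0))))"
    proof -
      have prem: "\<And>j. j \<in> J \<Longrightarrow> cc p (((\<lambda>_. \<sigma>)(i := \<tau>)) j) w = cc p \<sigma> w"
        using IJ(2) by auto
      show ?thesis
        using dev_sum[OF IJ(3,2), where c="\<lambda>j. cc p (((\<lambda>_. \<sigma>)(i := \<tau>)) j) w" and cz="cc p \<sigma> w"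
           and H="\<lambda>b k. if b \<and> B \<le> k then (if w then 1 else -1) else 0", OF prem]
        by (simp only: fun_upd_same)
    qed
    also have "\<dots> = cc p \<tau> w True * (if w then 1 else -1) * Tt (n-1) B (qq p \<sigma> w)"
    proof -
      have "bsum (card J) (cc p \<sigma> w True) (cc p \<sigma> w False) (\<lambda>k. 0) = 0"
        using bsum_cmult[of "card J" _ _ 0 "\<lambda>_. 0"] by simp
      moreover have "bsum (card J) (cc p \<sigma> w True) (cc p \<sigma> w False) (\<lambda>k. if B \<le> k + 1 then (if w then 1 else -1) else 0)
          = (if w then 1 else -1) * Tt (n-1) B (qq p \<sigma> w)"
        unfolding Tt_def IJ(4) cc_True cc_False bsum_cmult[symmetric]
        by (intro bsum_cong) auto
      ultimately show ?thesis by (simp add: UNIV_bool)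
    qed
    finally show ?thesis .
  qed
  note eqw = this
  show ?thesis
  proof -
    have qT: "qq p \<tau> True = p * \<tau> True + (1-p) * \<tau> False" and qF: "qq p \<tau> False = (1-p) * \<tau> True + p * \<tau> False"
      by (simp_all add: qq_def)
    have alg: "1/2 * ((p * tH + (1-p) * tL) * 1 * T1) + 1/2 * (((1-p) * tH + p * tL) * (-1) * T0)
      = tH * (1/2 * (p * T1 - (1-p) * T0)) + tL * (1/2 * ((1-p) * T1 - p * T0))" for tH tL T1 T0 :: real
      by (simp add: algebra_simps)
    show ?thesis
      unfolding expect_g[where g="\<lambda>w a. payoff B n i w a"] eqw AH_def AL_def
      by (simp only: sum_bool if_True if_False cc_True qT qF alg)
  qed
qed

definition Lo :: "nat \<Rightarrow> nat \<Rightarrow> real \<Rightarrow> real" where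
  "Lo m r q = (\<Sum>k<r. real (m choose k) * q^k * (1-q)^(m-k))"

definition Hi :: "nat \<Rightarrow> nat \<Rightarrow> real \<Rightarrow> real" where
  "Hi m r q = (\<Sum>k\<in>{r..m}. real (m choose k) * q^k * (1-q)^(m-k))"

definition dT :: "nat \<Rightarrow> nat \<Rightarrow> real \<Rightarrow> real" where
  "dT m r q = real m * real ((m-1) choose (r-1)) * q^(r-1) * (1-q)^(m-r)"

lemma Lo_Hi: assumes "r \<le> Suc m" shows "Lo m r q + Hi m r q = 1"
proof -
  have "{..m} = {..<r} \<union> {r..m}" using assms by auto
  moreover have "{..<r} \<inter> {r..m} = {}" by auto
  ultimately have "(\<Sum>k\<le>m. real (m choose k) * q^k * (1-q)^(m-k)) = Lo m r q + Hi m r q"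
    unfolding Lo_def Hi_def by (simp add: sum.union_disjoint)
  moreover have "(\<Sum>k\<le>m. real (m choose k) * q^k * (1-q)^(m-k)) = 1"
    using bsum_one[of q "1-q" m] by (simp add: bsum_def)
  ultimately show ?thesis by simp
qed

lemma Tt_Hi: assumes "1 \<le> B" shows "Tt m B q = Hi m (B-1) q"
proof -
  have "{k\<in>{..m}. B \<le> Suc k} = {B-1..m}" using assms by auto
  then show ?thesis
    unfolding Tt_def bsum_def Hi_def
    using sum.inter_filter[of "{..m}" "\<lambda>k. real (m choose k) * q^k * (1-q)^(m-k)" "\<lambda>k. B \<le> Suc k"]
    by (simp add: if_distrib cong: if_cong)
qed

lemma term_deriv:
  "((\<lambda>x. x^k * (1-x)^j) has_real_derivative
     (real k * q^(k-1) * (1-q)^j - real j * q^k * (1-q)^(j-1))) (at q)"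
  by (auto intro!: derivative_eq_intros simp: algebra_simps)

lemma Lo_deriv:
  assumes "r \<le> m"
  shows "(Lo m r has_real_derivative (if r = 0 then 0 else - dT m r q)) (at q)"
  using assms
proof (induction r)
  case 0
  then show ?case by (simp add: Lo_def[abs_def])
next
  case (Suc r)
  have eq: "Lo m (Suc r) = (\<lambda>x. Lo m r x + real (m choose r) * (x^r * (1-x)^(m-r)))"
    by (rule ext) (simp add: Lo_def mult.assoc)
  have d: "(Lo m (Suc r) has_real_derivative
      ((if r = 0 then 0 else - dT m r q) + real (m choose r) * (real r * q^(r-1) * (1-q)^(m-r) - real (m-r) * q^r * (1-q)^(m-r-1)))) (at q)"
  proof -
    have IH: "(Lo m r has_real_derivative (if r = 0 then 0 else - dT m r q)) (at q)" using Suc by simp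
    show ?thesis unfolding eq by (rule DERIV_add[OF IH DERIV_cmult[OF term_deriv]])
  qed
  have a1: "real (m choose r) * real r = real m * real ((m-1) choose (r-1))" if r1: "r \<ge> 1"
  proof -
    obtain s where s: "r = Suc s" using r1 by (cases r) auto
    have "Suc s * (m choose Suc s) = m * ((m - 1) choose s)" by (rule binomial_absorption)
    then have "real (Suc s) * real (m choose Suc s) = real m * real ((m - 1) choose s)"
      by (metis of_nat_mult)
    then show ?thesis using s by (metis mult.commute diff_Suc_1)
  qed
  have a2: "real (m choose r) * real (m - r) = real m * real ((m-1) choose r)"
  proof -
    have "(m - r) * (m choose r) = m * ((m - 1) choose r)" by (rule binomial_absorb_comp)
    then show ?thesis by (simp add: mult.commute flip: of_nat_mult)
  qed
  have "(if r = 0 then 0 else - dT m r q) + real (m choose r) * (real r * q^(r-1) * (1-q)^(m-r) - real (m-r) * q^r * (1-q)^(m-r-1))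
     = - dT m (Suc r) q"
  proof (cases "r = 0")
    case True
    then show ?thesis using a2 by (simp add: dT_def)
  next
    case False
    have "real (m choose r) * (real r * q^(r-1) * (1-q)^(m-r)) = dT m r q"
      using a1 False unfolding dT_def by (simp add: algebra_simps)
    moreover have "real (m choose r) * (real (m-r) * q^r * (1-q)^(m-r-1)) = dT m (Suc r) q"
      using a2 unfolding dT_def by (simp add: algebra_simps)
    ultimately show ?thesis using False by (simp add: algebra_simps)
  qed
  with d show ?case by simp
qed

lemma Hi_deriv:
  assumes "1 \<le> r" "r \<le> m"
  shows "(Hi m r has_real_derivative dT m r q) (at q)"
proof -
  have eq: "Hi m r = (\<lambda>x. 1 - Lo m r x)"
    using Lo_Hi[of r m] assms by (intro ext) (simp add: algebra_simps)
  show ?thesis unfolding eq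
    using DERIV_diff[OF DERIV_const Lo_deriv[OF assms(2)], of 1 q] assms by simp
qed

lemma Hi_cont: "continuous_on S (Hi m r)"
  unfolding Hi_def[abs_def] by (intro continuous_intros)

lemma Hi_nonneg: "0 \<le> q \<Longrightarrow> q \<le> 1 \<Longrightarrow> 0 \<le> Hi m r q"
  unfolding Hi_def by (intro sum_nonneg) auto

lemma Lo_nonneg: "0 \<le> q \<Longrightarrow> q \<le> 1 \<Longrightarrow> 0 \<le> Lo m r q"
  unfolding Lo_def by (intro sum_nonneg) auto

lemma Hi_le1: "0 \<le> q \<Longrightarrow> q \<le> 1 \<Longrightarrow> r \<le> Suc m \<Longrightarrow> Hi m r q \<le> 1"
  using Lo_Hi[of r m q] Lo_nonneg[of q m r] by linarith

lemma Hi_pos: assumes "0 < q" "q \<le> 1" "r \<le> m" shows "0 < Hi m r q"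
proof -
  have "0 < real (m choose m) * q^m * (1-q)^(m-m)" using assms by simp
  also have "\<dots> \<le> Hi m r q"
    unfolding Hi_def using assms
    by (intro member_le_sum[of m "{r..m}" "\<lambda>k. real (m choose k) * q^k * (1-q)^(m-k)"]) auto
  finally show ?thesis .
qed

lemma Hi_one: assumes "r \<le> m" shows "Hi m r 1 = 1"
proof -
  have "Hi m r 1 = (\<Sum>k\<in>{r..m}. if k = m then 1 else 0)"
    unfolding Hi_def by (intro sum.cong) auto
  also have "\<dots> = 1" using assms by simp
  finally show ?thesis .
qed

lemma Hi_r0: "Hi m 0 q = 1"
  using Lo_Hi[of 0 m q] by (simp add: Lo_def)

lemma Hi_q0: assumes "1 \<le> r" shows "Hi m r 0 = 0"
  unfolding Hi_def using assms by (intro sum.neutral) auto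

lemma dT_pos: assumes "1 \<le> r" "r \<le> m" "0 < q" "q < 1" shows "0 < dT m r q"
  unfolding dT_def using assms by simp

lemma Hi_strict_mono:
  assumes "1 \<le> r" "r \<le> m" "0 \<le> a" "a < b" "b \<le> 1"
  shows "Hi m r a < Hi m r b"
proof (rule DERIV_pos_imp_increasing_open[OF assms(4)])
  fix x assume "a < x" "x < b"
  then show "\<exists>y. (Hi m r has_real_derivative y) (at x) \<and> 0 < y"
    using Hi_deriv[OF assms(1,2)] dT_pos[OF assms(1,2)] assms by force
qed (rule Hi_cont)

lemma Hi_mono:
  assumes "r \<le> m" "0 \<le> a" "a \<le> b" "b \<le> 1"
  shows "Hi m r a \<le> Hi m r b"
proof (cases "r = 0")
  case True then show ?thesis by (simp add: Hi_r0)
next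
  case False
  then show ?thesis using Hi_strict_mono[of r m a b] assms by (cases "a = b") auto
qed

lemma term_split:
  fixes q :: real
  assumes "0 < q" "q < 1" "1 \<le> r" "r \<le> k" "k \<le> m"
  shows "q^k * (1-q)^(m-k) = q^(r-1) * (1-q)^(Suc (m-r)) * (q/(1-q))^(k-r+1)"
proof -
  have e1: "k = (r-1) + (k-r+1)" and e2: "Suc (m-r) = (m-k) + (k-r+1)" using assms by auto
  have nz: "(1-q)^(k-r+1) \<noteq> 0" using assms by simp
  have "q^(r-1) * (1-q)^(Suc (m-r)) * (q/(1-q))^(k-r+1)
      = q^(r-1) * q^(k-r+1) * ((1-q)^(m-k) * (1-q)^(k-r+1) / (1-q)^(k-r+1))"
    by (subst e2) (simp add: power_add power_divide)
  also have "\<dots> = q^k * (1-q)^(m-k)"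
    using nz by (subst (3) e1) (simp add: power_add)
  finally show ?thesis by simp
qed

definition Sx :: "nat \<Rightarrow> nat \<Rightarrow> real \<Rightarrow> real" where
  "Sx m r q = (\<Sum>k\<in>{r..m}. real (m choose k) * (q/(1-q))^(k-r+1))"

lemma Hi_split:
  assumes "0 < q" "q < 1" "1 \<le> r"
  shows "Hi m r q = q^(r-1) * (1-q)^(Suc (m-r)) * Sx m r q"
  unfolding Hi_def Sx_def sum_distrib_left
  by (intro sum.cong refl) (use term_split[OF assms] in auto)

lemma Sx_strict_mono:
  assumes "0 < a" "a < b" "b < 1" "r \<le> m"
  shows "Sx m r a < Sx m r b"
proof -
  have ab: "a/(1-a) < b/(1-b)" using assms by (simp add: field_simps)
  have a0: "0 \<le> a/(1-a)" using assms by simp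
  show ?thesis
    unfolding Sx_def
  proof (rule sum_strict_mono_ex1)
    show "\<forall>x\<in>{r..m}. real (m choose x) * (a / (1 - a)) ^ (x - r + 1) \<le> real (m choose x) * (b / (1 - b)) ^ (x - r + 1)"
    proof
      fix x assume "x \<in> {r..m}"
      show "real (m choose x) * (a / (1 - a)) ^ (x - r + 1) \<le> real (m choose x) * (b / (1 - b)) ^ (x - r + 1)"
        by (rule mult_left_mono[OF power_mono]) (use ab a0 in auto)
    qed
    show "\<exists>x\<in>{r..m}. real (m choose x) * (a / (1 - a)) ^ (x - r + 1) < real (m choose x) * (b / (1 - b)) ^ (x - r + 1)"
    proof (rule bexI[of _ r])
      have cp: "0 < real (m choose r)" using assms by simp
      show "real (m choose r) * (a / (1 - a)) ^ (r - r + 1) < real (m choose r) * (b / (1 - b)) ^ (r - r + 1)"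
        using mult_strict_left_mono[OF ab cp] by simp
    qed (use assms in auto)
  qed simp
qed

lemma key_ineq:
  assumes "1 \<le> r" "r \<le> m" "0 < q0" "q0 < q1" "q1 < 1"
  shows "dT m r q1 * (1-q1) * Hi m r q0 < dT m r q0 * (1-q0) * Hi m r q1"
proof -
  define c where "c = real m * real ((m-1) choose (r-1))"
  define \<chi> where "\<chi> q = q^(r-1) * (1-q)^(Suc (m-r))" for q :: real
  have c0: "0 < c" unfolding c_def using assms by simp
  have dchi: "dT m r q * (1-q) = c * \<chi> q" for q
    unfolding dT_def c_def \<chi>_def by (simp add: algebra_simps)
  have h0: "Hi m r q0 = \<chi> q0 * Sx m r q0" and h1: "Hi m r q1 = \<chi> q1 * Sx m r q1"
    using Hi_split[of q0 r m] Hi_split[of q1 r m] assms unfolding \<chi>_def by auto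
  have x0: "0 < \<chi> q0" and x1: "0 < \<chi> q1" unfolding \<chi>_def using assms by auto
  have s: "Sx m r q0 < Sx m r q1" using Sx_strict_mono assms by auto
  have "c * \<chi> q1 * (\<chi> q0 * Sx m r q0) < c * \<chi> q0 * (\<chi> q1 * Sx m r q1)"
    using s c0 x0 x1 by (simp add: mult.assoc mult.left_commute[of "\<chi> q1" "\<chi> q0"] mult_strict_left_mono)
  then show ?thesis using dchi[of q0] dchi[of q1] h0 h1 by simp
qed

definition gg :: "real \<Rightarrow> nat \<Rightarrow> nat \<Rightarrow> real \<Rightarrow> real" where
  "gg p m r y = (1-p) * Hi m r (p + (1-p)*y) - p * Hi m r ((1-p) + p*y)"

definition rho :: "real \<Rightarrow> nat \<Rightarrow> nat \<Rightarrow> real \<Rightarrow> real" where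
  "rho p m r y = Hi m r (p + (1-p)*y) / Hi m r ((1-p) + p*y)"

lemma lin_deriv: "((\<lambda>y. a + b*y) has_real_derivative b) (at x)"
  by (auto intro!: derivative_eq_intros)

lemma rho_decr:
  assumes p: "1/2 < p" "p < 1" and r: "1 \<le> r" "r \<le> m" and ab: "0 \<le> a" "a < b" "b < 1"
  shows "rho p m r b < rho p m r a"
proof (rule DERIV_neg_imp_decreasing[OF ab(2)])
  fix x assume x: "a \<le> x" "x \<le> b"
  define q1 where "q1 = p + (1-p)*x"
  define q0 where "q0 = (1-p) + p*x"
  have e: "q1 - q0 = (2*p-1)*(1-x)" "1 - q1 = (1-p)*(1-x)" "q0 = (1-p) + p*x"
    by (simp_all add: q1_def q0_def algebra_simps)
  have "0 < (2*p-1)*(1-x)" "0 < (1-p)*(1-x)" "0 \<le> p*x" using x ab p by auto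
  then have q: "0 < q0" "q0 < q1" "q1 < 1" using e p by linarith+
  have H0: "0 < Hi m r q0" using q r by (intro Hi_pos) auto
  have d: "(rho p m r has_real_derivative
      (dT m r q1 * (1-p) * Hi m r q0 - Hi m r q1 * (dT m r q0 * p)) / (Hi m r q0 * Hi m r q0)) (at x)"
    unfolding rho_def[abs_def] q1_def q0_def
    by (intro DERIV_divide DERIV_chain2[OF Hi_deriv[OF r]] lin_deriv) (use H0 q0_def in auto)
  have "dT m r q1 * (1-q1) * Hi m r q0 < dT m r q0 * (1-q0) * Hi m r q1"
    using key_ineq[OF r q] .
  moreover have "1 - q1 = (1-p) * (1-x)" "1 - q0 = p * (1-x)" unfolding q1_def q0_def by (simp_all add: algebra_simps)
  ultimately have "(1-x) * (dT m r q1 * (1-p) * Hi m r q0) < (1-x) * (Hi m r q1 * (dT m r q0 * p))"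
    by (simp add: algebra_simps)
  then have "dT m r q1 * (1-p) * Hi m r q0 - Hi m r q1 * (dT m r q0 * p) < 0"
    using x ab by (simp add: mult_less_cancel_left)
  then show "\<exists>y. (rho p m r has_real_derivative y) (at x) \<and> y < 0"
    using d H0 by (intro exI[of _ "(dT m r q1 * (1-p) * Hi m r q0 - Hi m r q1 * (dT m r q0 * p)) / (Hi m r q0 * Hi m r q0)"])
      (auto simp: divide_neg_pos)
qed

lemma gg_one: assumes "r \<le> m" shows "gg p m r 1 = 1 - 2*p"
  unfolding gg_def using Hi_one[OF assms] by simp

lemma gg_r0: "gg p m 0 y = 1 - 2*p"
  unfolding gg_def by (simp add: Hi_r0)

lemma gg_rho:
  assumes p: "1/2 < p" "p < 1" and r: "r \<le> m" and y: "0 \<le> y" "y \<le> 1"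
  shows "gg p m r y \<le> 0 \<longleftrightarrow> rho p m r y \<le> p/(1-p)"
    and "0 \<le> gg p m r y \<longleftrightarrow> p/(1-p) \<le> rho p m r y"
    and "0 < gg p m r y \<longleftrightarrow> p/(1-p) < rho p m r y"
proof -
  have "0 \<le> p*y" "0 \<le> p*(1-y)" using p y by auto
  then have "0 < (1-p) + p*y" "(1-p) + p*y \<le> 1" using p by (auto simp: algebra_simps)
  then have H0: "0 < Hi m r ((1-p) + p*y)" using r by (intro Hi_pos) auto
  show "gg p m r y \<le> 0 \<longleftrightarrow> rho p m r y \<le> p/(1-p)"
    "0 \<le> gg p m r y \<longleftrightarrow> p/(1-p) \<le> rho p m r y"
    "0 < gg p m r y \<longleftrightarrow> p/(1-p) < rho p m r y"
    unfolding gg_def rho_def using H0 p by (simp_all add: field_simps)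
qed

lemma single_crossing:
  assumes p: "1/2 < p" "p < 1" and r: "r \<le> m"
    and y: "0 \<le> y1" "y1 < y2" "y2 \<le> 1" and g1: "gg p m r y1 \<le> 0" and g2: "0 \<le> gg p m r y2"
  shows False
proof (cases "r = 0")
  case True then show ?thesis using g2 p by (simp add: gg_r0)
next
  case False
  have "y2 \<noteq> 1" using g2 gg_one[OF r, of p] p by auto
  then have y2: "y2 < 1" using y by simp
  have "rho p m r y2 < rho p m r y1" using rho_decr[OF p _ r y(1,2) y2] False by simp
  moreover have "rho p m r y1 \<le> p/(1-p)" using gg_rho(1)[OF p r, of y1] g1 y by simp
  moreover have "p/(1-p) \<le> rho p m r y2" using gg_rho(2)[OF p r, of y2] g2 y by simp
  ultimately show False by simp
qed

lemma bsum_ind: "bsum m q (1-q) (\<lambda>k. if s \<le> k then 1 else 0) = Hi m s q"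
proof -
  have "{k\<in>{..m}. s \<le> k} = {s..m}" by auto
  then show ?thesis
    unfolding bsum_def Hi_def
    using sum.inter_filter[of "{..m}" "\<lambda>k. real (m choose k) * q^k * (1-q)^(m-k)" "\<lambda>k. s \<le> k"]
    by (simp add: if_distrib cong: if_cong)
qed

lemma AH_Hi: "1 \<le> B \<Longrightarrow> AH p B n \<sigma> = 1/2 * (p * Hi (n-1) (B-1) (qq p \<sigma> True) - (1-p) * Hi (n-1) (B-1) (qq p \<sigma> False))"
  unfolding AH_def by (simp add: Tt_Hi)

lemma AL_Hi: "1 \<le> B \<Longrightarrow> AL p B n \<sigma> = 1/2 * ((1-p) * Hi (n-1) (B-1) (qq p \<sigma> True) - p * Hi (n-1) (B-1) (qq p \<sigma> False))"
  unfolding AL_def by (simp add: Tt_Hi)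

lemma BNE_sym_iff:
  assumes "0 < n"
  shows "is_BNE p B n (\<lambda>_. \<sigma>) \<longleftrightarrow> valid_strategy \<sigma> \<and>
    (\<forall>\<tau>. valid_strategy \<tau> \<longrightarrow> \<tau> True * AH p B n \<sigma> + \<tau> False * AL p B n \<sigma> \<le> \<sigma> True * AH p B n \<sigma> + \<sigma> False * AL p B n \<sigma>)"
proof -
  have self: "expect p n (\<lambda>_. \<sigma>) (\<lambda>w s a. payoff B n i w a) = \<sigma> True * AH p B n \<sigma> + \<sigma> False * AL p B n \<sigma>" if "i < n" for i
  proof -
    have "(\<lambda>_. \<sigma>)(i := \<sigma>) = (\<lambda>_::nat. \<sigma>)" by (rule ext) simp
    then show ?thesis using expect_dev[OF that, of p \<sigma> \<sigma> B] by simp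
  qed
  show ?thesis
  proof
    assume b: "is_BNE p B n (\<lambda>_. \<sigma>)"
    then have v: "valid_strategy \<sigma>" using assms unfolding is_BNE_def by auto
    have "\<tau> True * AH p B n \<sigma> + \<tau> False * AL p B n \<sigma> \<le> \<sigma> True * AH p B n \<sigma> + \<sigma> False * AL p B n \<sigma>"
      if "valid_strategy \<tau>" for \<tau>
    proof -
      have "expect p n ((\<lambda>_. \<sigma>)(0 := \<tau>)) (\<lambda>w s a. payoff B n 0 w a) \<le> expect p n (\<lambda>_. \<sigma>) (\<lambda>w s a. payoff B n 0 w a)"
        using b that assms unfolding is_BNE_def by blast
      then show ?thesis using expect_dev[OF assms, of p \<sigma> \<tau> B] self[OF assms] by simp
    qed
    then show "valid_strategy \<sigma> \<and> (\<forall>\<tau>. valid_strategy \<tau> \<longrightarrow> \<tau> True * AH p B n \<sigma> + \<tau> False * AL p B n \<sigma> \<le> \<sigma> True * AH p B n \<sigma> + \<sigma> False * AL p B n \<sigma>)"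
      using v by blast
  next
    assume h: "valid_strategy \<sigma> \<and> (\<forall>\<tau>. valid_strategy \<tau> \<longrightarrow> \<tau> True * AH p B n \<sigma> + \<tau> False * AL p B n \<sigma> \<le> \<sigma> True * AH p B n \<sigma> + \<sigma> False * AL p B n \<sigma>)"
    show "is_BNE p B n (\<lambda>_. \<sigma>)"
      unfolding is_BNE_def
    proof (intro conjI allI impI)
      fix i assume "i < n" then show "valid_strategy \<sigma>" using h by simp
    next
      fix i \<tau> assume i: "i < n" and t: "valid_strategy \<tau>"
      show "expect p n ((\<lambda>_. \<sigma>)(i := \<tau>)) (\<lambda>w s a. payoff B n i w a) \<le> expect p n (\<lambda>_. \<sigma>) (\<lambda>w s a. payoff B n i w a)"
        using expect_dev[OF i, of p \<sigma> \<tau> B] self[OF i] h t by simp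
    qed
  qed
qed

lemma nontriv_iff:
  "nontrivial p B n (\<lambda>_. \<sigma>) \<longleftrightarrow> 0 < Hi n B (qq p \<sigma> True) + Hi n B (qq p \<sigma> False)"
  unfolding nontrivial_def expect_sym[where h="\<lambda>k. if B \<le> k then 1 else 0"] bsum_ind by simp

lemma R_formula:
  assumes "0 < n" "1 \<le> B"
  shows "R p B n = 1/2 * (qq p (sym_eq p B n) True * Hi (n-1) (B-1) (qq p (sym_eq p B n) True)
     + qq p (sym_eq p B n) False * Hi (n-1) (B-1) (qq p (sym_eq p B n) False))"
proof -
  obtain m where n: "n = Suc m" using assms by (cases n) auto
  have "bsum n q (1-q) (\<lambda>k. real k / real n * (if B \<le> k then 1 else 0)) = q * Hi (n-1) (B-1) q" for q
  proof -
    have "bsum n q (1-q) (\<lambda>k. real k / real n * (if B \<le> k then 1 else 0))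
        = bsum (Suc m) q (1-q) (\<lambda>k. real k * ((if B \<le> k then 1 else 0) / real n))"
      using n by (simp add: mult.commute)
    also have "\<dots> = real (Suc m) * q * bsum m q (1-q) (\<lambda>k. (if B \<le> Suc k then 1 else 0) / real n)"
      by (rule bsum_k)
    also have "\<dots> = q * Tt m B q"
      unfolding Tt_def using n bsum_cmult[of m q "1-q" "1/real n" "\<lambda>k. if B \<le> Suc k then 1 else 0"]
      by simp
    finally show ?thesis using n Tt_Hi[OF assms(2)] by simp
  qed
  then show ?thesis
    unfolding R_def expect_sym[where h="\<lambda>k. real k / real n * (if B \<le> k then 1 else 0)"] by simp
qed

lemma qq_bounds:
  assumes "valid_strategy \<sigma>" "0 \<le> p" "p \<le> 1"
  shows "0 \<le> qq p \<sigma> w" "qq p \<sigma> w \<le> 1"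
proof -
  have s: "0 \<le> \<sigma> True" "\<sigma> True \<le> 1" "0 \<le> \<sigma> False" "\<sigma> False \<le> 1"
    using assms(1) by (auto simp: valid_strategy_def)
  have "0 \<le> p * \<sigma> True" "0 \<le> (1-p) * \<sigma> False" "0 \<le> (1-p) * \<sigma> True" "0 \<le> p * \<sigma> False"
    "p * \<sigma> True \<le> p" "(1-p) * \<sigma> False \<le> 1-p" "(1-p) * \<sigma> True \<le> 1-p" "p * \<sigma> False \<le> p"
    using s assms by (auto intro: mult_nonneg_nonneg mult_left_le)
  then show "0 \<le> qq p \<sigma> w" "qq p \<sigma> w \<le> 1" unfolding qq_def by auto
qed

lemma dev_conds:
  assumes "0 < n" "is_BNE p B n (\<lambda>_. \<sigma>)"
  shows "\<sigma> True < 1 \<Longrightarrow> AH p B n \<sigma> \<le> 0" "0 < \<sigma> True \<Longrightarrow> 0 \<le> AH p B n \<sigma>"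
    "\<sigma> False < 1 \<Longrightarrow> AL p B n \<sigma> \<le> 0" "0 < \<sigma> False \<Longrightarrow> 0 \<le> AL p B n \<sigma>"
proof -
  have v: "valid_strategy \<sigma>" and opt: "\<And>\<tau>. valid_strategy \<tau> \<Longrightarrow> \<tau> True * AH p B n \<sigma> + \<tau> False * AL p B n \<sigma> \<le> \<sigma> True * AH p B n \<sigma> + \<sigma> False * AL p B n \<sigma>"
    using assms BNE_sym_iff[OF assms(1)] by auto
  have vu: "valid_strategy (\<sigma>(b := c))" if "0 \<le> c" "c \<le> 1" for b c
    using v that unfolding valid_strategy_def by auto
  show "AH p B n \<sigma> \<le> 0" if "\<sigma> True < 1"
  proof -
    have "(1 - \<sigma> True) * AH p B n \<sigma> \<le> 0" using opt[OF vu[of 1 True]] by (simp add: algebra_simps)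
    then show ?thesis using that by (simp add: mult_le_0_iff)
  qed
  show "0 \<le> AH p B n \<sigma>" if "0 < \<sigma> True"
  proof -
    have "0 \<le> \<sigma> True * AH p B n \<sigma>" using opt[OF vu[of 0 True]] by (simp add: algebra_simps)
    then show ?thesis using that by (simp add: zero_le_mult_iff)
  qed
  show "AL p B n \<sigma> \<le> 0" if "\<sigma> False < 1"
  proof -
    have "(1 - \<sigma> False) * AL p B n \<sigma> \<le> 0" using opt[OF vu[of 1 False]] by (simp add: algebra_simps)
    then show ?thesis using that by (simp add: mult_le_0_iff)
  qed
  show "0 \<le> AL p B n \<sigma>" if "0 < \<sigma> False"
  proof -
    have "0 \<le> \<sigma> False * AL p B n \<sigma>" using opt[OF vu[of 0 False]] by (simp add: algebra_simps)
    then show ?thesis using that by (simp add: zero_le_mult_iff)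
  qed
qed

definition Peq :: "real \<Rightarrow> nat \<Rightarrow> nat \<Rightarrow> strategy \<Rightarrow> bool" where
  "Peq p B n \<tau> \<longleftrightarrow> valid_strategy \<tau> \<and> is_BNE p B n (\<lambda>_. \<tau>) \<and> nontrivial p B n (\<lambda>_. \<tau>)"

lemma Hi_n0: "1 \<le> B \<Longrightarrow> Hi n B 0 = 0"
  by (rule Hi_q0)

lemma force_one:
  assumes p: "1/2 < p" "p < 1" and B: "1 \<le> B" "B \<le> n" and P: "Peq p B n \<sigma>"
  shows "\<sigma> True = 1"
proof (rule ccontr)
  assume x1: "\<sigma> True \<noteq> 1"
  have n: "0 < n" using B by simp
  have v: "valid_strategy \<sigma>" and bne: "is_BNE p B n (\<lambda>_. \<sigma>)" and nt: "nontrivial p B n (\<lambda>_. \<sigma>)"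
    using P by (auto simp: Peq_def)
  have s: "0 \<le> \<sigma> True" "\<sigma> True \<le> 1" "0 \<le> \<sigma> False" "\<sigma> False \<le> 1"
    using v by (auto simp: valid_strategy_def)
  define q1 where "q1 = qq p \<sigma> True"
  define q0 where "q0 = qq p \<sigma> False"
  have qb: "0 \<le> q1" "q1 \<le> 1" "0 \<le> q0" "q0 \<le> 1" using qq_bounds[OF v, of p] p unfolding q1_def q0_def by auto
  have AH0: "AH p B n \<sigma> \<le> 0" using dev_conds(1)[OF n bne] x1 s by simp
  have not00: "\<not> (\<sigma> True = 0 \<and> \<sigma> False = 0)"
  proof
    assume "\<sigma> True = 0 \<and> \<sigma> False = 0"
    then have "qq p \<sigma> True = 0" "qq p \<sigma> False = 0" by (auto simp: qq_def)
    then show False using nt B by (simp add: nontriv_iff Hi_n0)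
  qed
  have q0pos: "0 < q0"
  proof -
    have "0 \<le> (1-p) * \<sigma> True" "0 \<le> p * \<sigma> False" using s p by auto
    moreover have "0 < (1-p) * \<sigma> True \<or> 0 < p * \<sigma> False"
      using not00 s p by (auto simp: less_le)
    ultimately show ?thesis unfolding q0_def qq_def by auto
  qed
  define m where "m = n - 1"
  define r where "r = B - 1"
  have rm: "r \<le> m" using B unfolding m_def r_def by simp
  have AH: "AH p B n \<sigma> = 1/2 * (p * Hi m r q1 - (1-p) * Hi m r q0)"
    using AH_Hi[OF B(1)] unfolding m_def r_def q1_def q0_def by simp
  have AL: "AL p B n \<sigma> = 1/2 * ((1-p) * Hi m r q1 - p * Hi m r q0)"
    using AL_Hi[OF B(1)] unfolding m_def r_def q1_def q0_def by simp
  show False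
  proof (cases "r = 0")
    case True
    then show False using AH0 AH p by (simp add: Hi_r0)
  next
    case False
    then have r1: "1 \<le> r" by simp
    have H0: "0 < Hi m r q0" using q0pos qb rm by (intro Hi_pos) auto
    have H1: "0 \<le> Hi m r q1" using qb by (intro Hi_nonneg) auto
    have a: "p * Hi m r q1 \<le> (1-p) * Hi m r q0" using AH0 AH by simp
    have "(1-p) * Hi m r q1 < p * Hi m r q0"
    proof -
      have "p * ((1-p) * Hi m r q1) = (1-p) * (p * Hi m r q1)" by (simp add: algebra_simps)
      also have "\<dots> \<le> (1-p) * ((1-p) * Hi m r q0)" using a p by (intro mult_left_mono) auto
      also have "\<dots> < p * (p * Hi m r q0)"
      proof -
        have "(1-p)*(1-p) < p*p" using mult_strict_mono[of "1-p" p "1-p" p] p by auto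
        then show ?thesis using H0 by (simp add: mult.assoc[symmetric] mult_strict_right_mono)
      qed
      finally show ?thesis using p by (simp add: mult_less_cancel_left)
    qed
    then have "AL p B n \<sigma> < 0" using AL by simp
    then have y0: "\<sigma> False = 0" using dev_conds(4)[OF n bne] s by (cases "\<sigma> False = 0") auto
    then have x0: "0 < \<sigma> True" using not00 s by auto
    have "q0 < q1" "q1 \<le> 1" using qb unfolding q0_def q1_def qq_def using y0 x0 p by (auto simp: mult_strict_right_mono)
    then have "Hi m r q0 < Hi m r q1" using Hi_strict_mono[OF r1 rm, of q0 q1] qb by auto
    then have "p * Hi m r q0 < p * Hi m r q1" using p by simp
    moreover have "(1-p) * Hi m r q0 < p * Hi m r q0" using H0 p by (simp add: mult_strict_right_mono)
    ultimately show False using a by simp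
  qed
qed

lemma AL_gg:
  assumes "1 \<le> B" "\<sigma> True = 1"
  shows "AL p B n \<sigma> = 1/2 * gg p (n-1) (B-1) (\<sigma> False)"
  using AL_Hi[OF assms(1)] assms(2) unfolding gg_def qq_def by simp

lemma y_conds:
  assumes p: "1/2 < p" "p < 1" and B: "1 \<le> B" "B \<le> n" and P: "Peq p B n \<sigma>"
  shows "\<sigma> False < 1 \<Longrightarrow> gg p (n-1) (B-1) (\<sigma> False) \<le> 0"
    and "0 < \<sigma> False \<Longrightarrow> 0 \<le> gg p (n-1) (B-1) (\<sigma> False)"
proof -
  have n: "0 < n" using B by simp
  have bne: "is_BNE p B n (\<lambda>_. \<sigma>)" using P by (simp add: Peq_def)
  have AL: "AL p B n \<sigma> = 1/2 * gg p (n-1) (B-1) (\<sigma> False)"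
    using AL_gg[of B \<sigma> p n] B(1) force_one[OF p B P] by simp
  show "\<sigma> False < 1 \<Longrightarrow> gg p (n-1) (B-1) (\<sigma> False) \<le> 0" using dev_conds(3)[OF n bne] AL by simp
  show "0 < \<sigma> False \<Longrightarrow> 0 \<le> gg p (n-1) (B-1) (\<sigma> False)" using dev_conds(4)[OF n bne] AL by simp
qed

lemma Peq_unique:
  assumes p: "1/2 < p" "p < 1" and B: "1 \<le> B" "B \<le> n" and P1: "Peq p B n \<sigma>1" and P2: "Peq p B n \<sigma>2"
  shows "\<sigma>1 = \<sigma>2"
proof -
  have rm: "B - 1 \<le> n - 1" using B by simp
  have v: "valid_strategy \<sigma>1" "valid_strategy \<sigma>2" using P1 P2 by (auto simp: Peq_def)
  have nlt: False if Pa: "Peq p B n \<sigma>a" and Pb: "Peq p B n \<sigma>b" and lt: "\<sigma>a False < \<sigma>b False" for \<sigma>a \<sigma>b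
  proof -
    have va: "valid_strategy \<sigma>a" and vb: "valid_strategy \<sigma>b" using Pa Pb by (auto simp: Peq_def)
    have "0 \<le> \<sigma>a False" "\<sigma>b False \<le> 1" using va vb by (auto simp: valid_strategy_def)
    moreover have "gg p (n-1) (B-1) (\<sigma>a False) \<le> 0" using y_conds(1)[OF p B Pa] lt calculation by simp
    moreover have "0 \<le> gg p (n-1) (B-1) (\<sigma>b False)" using y_conds(2)[OF p B Pb] lt calculation by simp
    ultimately show False using single_crossing[OF p rm _ lt] by simp
  qed
  have "\<sigma>1 False = \<sigma>2 False" using nlt[OF P1 P2] nlt[OF P2 P1] by fastforce
  moreover have "\<sigma>1 True = \<sigma>2 True" using force_one[OF p B P1] force_one[OF p B P2] by simp
  ultimately show ?thesis by (intro ext) (metis (full_types))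
qed

lemma gg_cont: "continuous_on S (gg p m r)"
  unfolding gg_def[abs_def] Hi_def by (intro continuous_intros)

lemma Peq_exists:
  assumes p: "1/2 < p" "p < 1" and B: "1 \<le> B" "B \<le> n"
  shows "\<exists>\<sigma>. Peq p B n \<sigma>"
proof -
  have n: "0 < n" using B by simp
  define m where "m = n - 1"
  define r where "r = B - 1"
  have rm: "r \<le> m" using B unfolding m_def r_def by simp
  have good: "Peq p B n (\<lambda>b. if b then 1 else y)"
    if y: "0 \<le> y" "y \<le> 1" and cond: "gg p m r y = 0 \<or> (gg p m r y \<le> 0 \<and> y = 0)" for y
  proof -
    define \<sigma> where "\<sigma> = (\<lambda>b::bool. if b then 1 else y)"
    have v: "valid_strategy \<sigma>" using y unfolding \<sigma>_def valid_strategy_def by auto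
    have q1: "qq p \<sigma> True = p + (1-p)*y" and q0: "qq p \<sigma> False = (1-p) + p*y"
      unfolding qq_def \<sigma>_def by simp_all
    have "0 \<le> p*y" "0 \<le> (1-p)*(1-y)" "0 \<le> (2*p-1)*(1-y)" using p y by auto
    then have qs: "0 \<le> (1-p) + p*y" "(1-p) + p*y \<le> p + (1-p)*y" "p + (1-p)*y \<le> 1"
      using p by (auto simp: algebra_simps)
    have Hm: "Hi m r ((1-p) + p*y) \<le> Hi m r (p + (1-p)*y)" using Hi_mono[OF rm] qs by auto
    have Hn: "0 \<le> Hi m r ((1-p) + p*y)" using qs by (intro Hi_nonneg) auto
    have AH: "0 \<le> AH p B n \<sigma>"
    proof -
      have i1: "(1-p) * Hi m r ((1-p) + p*y) \<le> p * Hi m r ((1-p) + p*y)" using Hn p by (intro mult_right_mono) auto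
      have i2: "p * Hi m r ((1-p) + p*y) \<le> p * Hi m r (p + (1-p)*y)" using Hm p by (intro mult_left_mono) auto
      have e: "AH p B n \<sigma> = 1/2 * (p * Hi m r (p + (1-p)*y) - (1-p) * Hi m r ((1-p) + p*y))"
        using AH_Hi[OF B(1), of p n \<sigma>] q1 q0 unfolding m_def r_def by simp
      have "0 \<le> p * Hi m r (p + (1-p)*y) - (1-p) * Hi m r ((1-p) + p*y)" using i1 i2 by linarith
      then show ?thesis unfolding e by simp
    qed
    have AL: "AL p B n \<sigma> = 1/2 * gg p m r y"
      using AL_gg[OF B(1), of \<sigma>] unfolding \<sigma>_def m_def r_def by simp
    have opt: "\<tau> True * AH p B n \<sigma> + \<tau> False * AL p B n \<sigma> \<le> \<sigma> True * AH p B n \<sigma> + \<sigma> False * AL p B n \<sigma>"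
      if t: "valid_strategy \<tau>" for \<tau>
    proof -
      have t1: "0 \<le> \<tau> False" "\<tau> True \<le> 1" using t by (auto simp: valid_strategy_def)
      have "\<tau> True * AH p B n \<sigma> \<le> \<sigma> True * AH p B n \<sigma>"
        using mult_right_mono[OF t1(2) AH] unfolding \<sigma>_def by simp
      moreover have "\<tau> False * AL p B n \<sigma> \<le> \<sigma> False * AL p B n \<sigma>"
        using cond AL t1 unfolding \<sigma>_def by (auto simp: mult_nonneg_nonpos)
      ultimately show ?thesis by simp
    qed
    have bne: "is_BNE p B n (\<lambda>_. \<sigma>)" using BNE_sym_iff[OF n] v opt by blast
    have "0 \<le> (1-p)*y" using p y by auto
    then have "0 < Hi n B (p + (1-p)*y)" using qs p B by (intro Hi_pos) auto
    moreover have "0 \<le> Hi n B ((1-p) + p*y)" using qs by (intro Hi_nonneg) auto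
    ultimately have nt: "nontrivial p B n (\<lambda>_. \<sigma>)" using nontriv_iff q1 q0 by simp
    show ?thesis using v bne nt unfolding Peq_def \<sigma>_def by simp
  qed
  show ?thesis
  proof (cases "gg p m r 0 \<le> 0")
    case True
    then show ?thesis using good[of 0] by auto
  next
    case False
    have "gg p m r 1 \<le> 0" using gg_one[OF rm, of p] p by simp
    then obtain y where "0 \<le> y" "y \<le> 1" "gg p m r y = 0"
      using IVT2'[of "gg p m r" 1 0 0] False gg_cont by force
    then show ?thesis using good by blast
  qed
qed

lemma sym_eq_Peq:
  assumes p: "1/2 < p" "p < 1" and B: "1 \<le> B" "B \<le> n"
  shows "Peq p B n (sym_eq p B n)"
proof -
  have "\<exists>!\<tau>. Peq p B n \<tau>" using Peq_exists[OF p B] Peq_unique[OF p B] by blast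
  then have "Peq p B n (THE \<tau>. Peq p B n \<tau>)" by (rule theI')
  moreover have "sym_eq p B n = (THE \<tau>. Peq p B n \<tau>)"
    unfolding sym_eq_def Peq_def by simp
  ultimately show ?thesis by simp
qed

lemma bsum_ind_lt: assumes "r \<le> Suc m" shows "bsum m q (1-q) (\<lambda>k. if k < r then 1 else 0) = Lo m r q"
proof -
  have "{k\<in>{..m}. k < r} = {..<r}" using assms by auto
  then show ?thesis
    unfolding bsum_def Lo_def
    using sum.inter_filter[of "{..m}" "\<lambda>k. real (m choose k) * q^k * (1-q)^(m-k)" "\<lambda>k. k < r"]
    by (simp add: if_distrib cong: if_cong)
qed

lemma cheb_low:
  assumes q: "0 \<le> q" "q \<le> 1" and r: "r \<le> m" and D: "0 < D" "D \<le> real m * q - real r"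
  shows "1 - real m * q * (1-q) / D^2 \<le> Hi m r q"
proof -
  have "Lo m r q = bsum m q (1-q) (\<lambda>k. if k < r then 1 else 0)" using bsum_ind_lt r by simp
  also have "\<dots> \<le> bsum m q (1-q) (\<lambda>k. (1/D^2) * (real k - real m * q)^2)"
  proof (rule bsum_mono)
    fix k assume "k \<le> m"
    show "(if k < r then 1 else 0) \<le> (1/D^2) * (real k - real m * q)^2"
    proof (cases "k < r")
      case True
      then have "real k + 1 \<le> real r" by linarith
      then have "D \<le> real m * q - real k" using D by linarith
      then have "D^2 \<le> (real m * q - real k)^2" using D by (intro power_mono) auto
      also have "\<dots> = (real k - real m * q)^2" by (simp add: power2_commute)
      finally show ?thesis using True D by (simp add: field_simps)
    qed simp
  qed (use q in auto)
  also have "\<dots> = real m * q * (1-q) / D^2"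
    using bsum_cmult[of m q "1-q" "1/D^2" "\<lambda>k. (real k - real m*q)^2"] bsum_var[of m q] by simp
  finally show ?thesis using Lo_Hi[of r m q] r by simp
qed

lemma cheb_up:
  assumes q: "0 \<le> q" "q \<le> 1" and D: "0 < D" "D \<le> real r - real m * q"
  shows "Hi m r q \<le> real m * q * (1-q) / D^2"
proof -
  have "Hi m r q = bsum m q (1-q) (\<lambda>k. if r \<le> k then 1 else 0)" using bsum_ind by simp
  also have "\<dots> \<le> bsum m q (1-q) (\<lambda>k. (1/D^2) * (real k - real m * q)^2)"
  proof (rule bsum_mono)
    fix k assume "k \<le> m"
    show "(if r \<le> k then 1 else 0) \<le> (1/D^2) * (real k - real m * q)^2"
    proof (cases "r \<le> k")
      case True
      then have "D \<le> real k - real m * q" using D by linarith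
      then have "D^2 \<le> (real k - real m * q)^2" using D by (intro power_mono) auto
      then show ?thesis using True D by (simp add: field_simps)
    qed simp
  qed (use q in auto)
  also have "\<dots> = real m * q * (1-q) / D^2"
    using bsum_cmult[of m q "1-q" "1/D^2" "\<lambda>k. (real k - real m*q)^2"] bsum_var[of m q] by simp
  finally show ?thesis .
qed

lemma sym_eq_facts:
  assumes p: "1/2 < p" "p < 1" and B: "1 \<le> B" "B \<le> n"
  defines "y \<equiv> sym_eq p B n False"
  shows "sym_eq p B n True = 1" "0 \<le> y" "y \<le> 1"
    "y < 1 \<Longrightarrow> gg p (n-1) (B-1) y \<le> 0" "0 < y \<Longrightarrow> 0 \<le> gg p (n-1) (B-1) y"
    "R p B n = 1/2 * ((p + (1-p)*y) * Hi (n-1) (B-1) (p + (1-p)*y) + ((1-p) + p*y) * Hi (n-1) (B-1) ((1-p) + p*y))"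
proof -
  have P: "Peq p B n (sym_eq p B n)" by (rule sym_eq_Peq[OF p B])
  show one: "sym_eq p B n True = 1" by (rule force_one[OF p B P])
  show "0 \<le> y" "y \<le> 1" using P unfolding Peq_def valid_strategy_def y_def by auto
  show "y < 1 \<Longrightarrow> gg p (n-1) (B-1) y \<le> 0" "0 < y \<Longrightarrow> 0 \<le> gg p (n-1) (B-1) y"
    using y_conds[OF p B P] unfolding y_def by auto
  show "R p B n = 1/2 * ((p + (1-p)*y) * Hi (n-1) (B-1) (p + (1-p)*y) + ((1-p) + p*y) * Hi (n-1) (B-1) ((1-p) + p*y))"
    using R_formula[of n B p] B one unfolding qq_def y_def by simp
qed

lemma alg_int:
  fixes p H1 H0 q1 q0 R :: real
  assumes "p \<noteq> 0" "(1-p)*H1 - p*H0 = 0" "R = 1/2*(q1*H1 + q0*H0)"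
  shows "R = H1*(p*q1 + (1-p)*q0)/(2*p)"
proof -
  have e1: "p*H0 = (1-p)*H1" using assms(2) by simp
  have "2*p*R = p*(q1*H1) + q0*(p*H0)" using assms(3) by (simp add: algebra_simps)
  also have "\<dots> = p*(q1*H1) + q0*((1-p)*H1)" by (simp only: e1)
  also have "\<dots> = H1*(p*q1 + (1-p)*q0)" by (simp add: algebra_simps)
  finally show ?thesis using assms(1) by (simp add: field_simps)
qed

lemma interior_R:
  assumes p: "1/2 < p" "p < 1" and B: "1 \<le> B" "B \<le> n" and y0: "0 < sym_eq p B n False"
  defines "y \<equiv> sym_eq p B n False"
  shows "y < 1" "gg p (n-1) (B-1) y = 0"
    "R p B n = Hi (n-1) (B-1) (p + (1-p)*y) * (p * (p + (1-p)*y) + (1-p) * ((1-p) + p*y)) / (2*p)"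
proof -
  note f = sym_eq_facts[OF p B]
  have rm: "B - 1 \<le> n - 1" using B by simp
  have g: "0 \<le> gg p (n-1) (B-1) y" using f(5) y0 unfolding y_def by simp
  show y1: "y < 1"
  proof (rule ccontr)
    assume "\<not> y < 1" then have "y = 1" using f(3) unfolding y_def by simp
    then show False using g gg_one[OF rm, of p] p by simp
  qed
  show gz: "gg p (n-1) (B-1) y = 0" using f(4) g y1 unfolding y_def by simp
  show "R p B n = Hi (n-1) (B-1) (p + (1-p)*y) * (p * (p + (1-p)*y) + (1-p) * ((1-p) + p*y)) / (2*p)"
    by (rule alg_int[OF _ _ f(6)[folded y_def]]) (use gz p in \<open>auto simp: gg_def\<close>)
qed

lemma R_upper:
  assumes p: "1/2 < p" "p < 1" and B: "1 \<le> B" "B \<le> n"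
  shows "R p B n \<le> 1 / (2*p)"
proof -
  note f = sym_eq_facts[OF p B]
  define y where "y = sym_eq p B n False"
  have rm: "B - 1 \<le> Suc (n - 1)" using B by simp
  have "0 \<le> p*y" "0 \<le> p*(1-y)" "0 \<le> (1-p)*y" "0 \<le> (1-p)*(1-y)" using p f(2,3) unfolding y_def by auto
  then have qs: "0 \<le> p + (1-p)*y" "p + (1-p)*y \<le> 1" "0 \<le> (1-p) + p*y" "(1-p) + p*y \<le> 1"
    using p by (auto simp: algebra_simps)
  define H1 where "H1 = Hi (n-1) (B-1) (p + (1-p)*y)"
  define H0 where "H0 = Hi (n-1) (B-1) ((1-p) + p*y)"
  have h: "0 \<le> H1" "H1 \<le> 1" "0 \<le> H0" "H0 \<le> 1"
    unfolding H1_def H0_def using qs rm by (auto intro: Hi_nonneg Hi_le1)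
  show ?thesis
  proof (cases "y = 0")
    case True
    have "R p B n = 1/2 * (p * H1 + (1-p) * H0)" using f(6) True unfolding y_def H1_def H0_def by simp
    also have "\<dots> \<le> 1/2 * (p * 1 + (1-p) * 1)"
      using h p by (intro mult_left_mono add_mono mult_left_mono) auto
    also have "\<dots> \<le> 1/(2*p)" using p by (simp add: field_simps)
    finally show ?thesis .
  next
    case False
    then have y0: "0 < sym_eq p B n False" using f(2) unfolding y_def by simp
    have "R p B n = H1 * (p * (p + (1-p)*y) + (1-p) * ((1-p) + p*y)) / (2*p)"
      using interior_R(3)[OF p B y0] unfolding y_def H1_def by simp
    also have "\<dots> \<le> 1 * 1 / (2*p)"
    proof -
      have "p * (p + (1-p)*y) + (1-p) * ((1-p) + p*y) \<le> p * 1 + (1-p) * 1"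
        using qs p by (intro add_mono mult_left_mono) auto
      then have "p * (p + (1-p)*y) + (1-p) * ((1-p) + p*y) \<le> 1" by simp
      moreover have "0 \<le> p * (p + (1-p)*y) + (1-p) * ((1-p) + p*y)" using qs p by simp
      ultimately show ?thesis using h p by (intro divide_right_mono mult_mono) auto
    qed
    finally show ?thesis by simp
  qed
qed

lemma frac_K: "(k::real) \<noteq> 0 \<Longrightarrow> x * k / (d * k * k) = x / (d * k)"
  by (cases "d = 0") (auto simp: field_simps)

lemma R_lower:
  fixes p :: real and K m :: nat
  assumes p: "1/2 < p" "p < 1" and K: "1 \<le> K" "2*K \<le> m"
  defines "a \<equiv> 2*(1-p)/((2*p-1)^2 * real K)"
  defines "c \<equiv> 2*p/((2*p-1)^2 * real K)"
  assumes cond: "p * c < (1-p) * (1 - a)"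
  shows "(1 - a) * (1 - 4*p*(1-p)*real K/real m) / (2*p) \<le> R p (Suc m - K) (Suc m)"
proof -
  define n where "n = Suc m"
  define B where "B = Suc m - K"
  have B: "1 \<le> B" "B \<le> n" using K unfolding B_def n_def by auto
  have nm: "n - 1 = m" "B - 1 = m - K" unfolding n_def B_def by auto
  have m0: "0 < real m" using K by simp
  define \<delta> where "\<delta> = 2*p - 1"
  have d0: "0 < \<delta>" using p unfolding \<delta>_def by simp
  have dsq: "(2*p-1)*(2*p-1) \<noteq> 0" using p by simp
  define D where "D = \<delta> * real K"
  have D0: "0 < D" using d0 K unfolding D_def by simp
  define e where "e = 2 * real K / real m"
  have e: "0 < e" "e \<le> 1" "real m * e = 2 * real K" using K m0 unfolding e_def by (auto simp: field_simps)
  define y1 where "y1 = 1 - e"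
  define q1 where "q1 = p + (1-p)*y1"
  define q0 where "q0 = (1-p) + p*y1"
  have q1e: "1 - q1 = (1-p)*e" and q0e: "1 - q0 = p*e" unfolding q1_def q0_def y1_def by (simp_all add: algebra_simps)
  have "0 \<le> (1-p)*e" "(1-p)*e \<le> 1" "0 \<le> p*e" "p*e \<le> 1" using e p by (auto intro: mult_le_one)
  then have qb: "0 \<le> q1" "q1 \<le> 1" "0 \<le> q0" "q0 \<le> 1" using q1e q0e by linarith+
  have rK: "real (m - K) = real m - real K" using K by simp
  have DD: "D^2 = \<delta>^2 * real K * real K" unfolding D_def by (simp add: power2_eq_square)
  have H1: "1 - a \<le> Hi m (m-K) q1"
  proof -
    have mq1: "real m * q1 = real m - (1-p)*(2*real K)"
    proof -
      have qq: "q1 = 1 - (1-p)*e" using q1e by linarith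
      have "real m * q1 = real m * (1 - (1-p)*e)" by (simp only: qq)
      also have "\<dots> = real m - (1-p)*(real m * e)" by (simp add: algebra_simps)
      finally show ?thesis using e(3) by simp
    qed
    have "D \<le> real m * q1 - real (m - K)"
      using rK mq1 unfolding D_def \<delta>_def by (simp add: algebra_simps)
    then have "1 - real m * q1 * (1-q1) / D^2 \<le> Hi m (m-K) q1"
      using cheb_low[OF qb(1,2) _ D0] by simp
    moreover have "real m * q1 * (1-q1) / D^2 \<le> a"
    proof -
      have "real m * q1 * (1-q1) \<le> real m * 1 * (1-q1)" using qb m0 by (intro mult_right_mono mult_left_mono) auto
      also have "\<dots> = (1-p) * (real m * e)" by (simp only: mult_1_right q1e, (simp add: algebra_simps)?)
      also have "\<dots> = 2 * (1-p) * real K" by (simp only: e(3), (simp add: algebra_simps)?)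
      finally have "real m * q1 * (1-q1) / D^2 \<le> 2 * (1-p) * real K / D^2"
        using D0 by (simp add: divide_right_mono)
      also have "\<dots> = a" unfolding a_def DD \<delta>_def using K frac_K[of "real K" "2*(1-p)" "(2*p-1)^2"] by (simp add: mult.assoc)
      finally show ?thesis .
    qed
    ultimately show ?thesis by simp
  qed
  have H0: "Hi m (m-K) q0 \<le> c"
  proof -
    have mq0: "real m * q0 = real m - p*(2*real K)"
    proof -
      have qq: "q0 = 1 - p*e" using q0e by linarith
      have "real m * q0 = real m * (1 - p*e)" by (simp only: qq)
      also have "\<dots> = real m - p*(real m * e)" by (simp add: algebra_simps)
      finally show ?thesis using e(3) by simp
    qed
    have "D \<le> real (m - K) - real m * q0"
      using rK mq0 unfolding D_def \<delta>_def by (simp add: algebra_simps)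
    then have "Hi m (m-K) q0 \<le> real m * q0 * (1-q0) / D^2"
      using cheb_up[OF qb(3,4) D0] by simp
    also have "real m * q0 * (1-q0) / D^2 \<le> c"
    proof -
      have "real m * q0 * (1-q0) \<le> real m * 1 * (1-q0)" using qb m0 by (intro mult_right_mono mult_left_mono) auto
      also have "\<dots> = p * (real m * e)" by (simp only: mult_1_right q0e, (simp add: algebra_simps)?)
      also have "\<dots> = 2 * p * real K" by (simp only: e(3), (simp add: algebra_simps)?)
      finally have "real m * q0 * (1-q0) / D^2 \<le> 2 * p * real K / D^2"
        using D0 by (simp add: divide_right_mono)
      also have "\<dots> = c" unfolding c_def DD \<delta>_def using K frac_K[of "real K" "2*p" "(2*p-1)^2"] by (simp add: mult.assoc)
      finally show ?thesis .
    qed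
    finally show ?thesis .
  qed
  have ggpos: "0 < gg p m (m-K) y1"
  proof -
    have "(1-p) * (1-a) \<le> (1-p) * Hi m (m-K) q1" using H1 p by (intro mult_left_mono) auto
    moreover have "p * Hi m (m-K) q0 \<le> p * c" using H0 p by (intro mult_left_mono) auto
    ultimately show ?thesis using cond unfolding gg_def q1_def[symmetric] q0_def[symmetric] by linarith
  qed
  note f = sym_eq_facts[OF p B]
  define ys where "ys = sym_eq p B n False"
  have rm: "m - K \<le> m" by simp
  have y1b: "0 \<le> y1" "y1 < 1" using e unfolding y1_def by auto
  have gt: "y1 < ys"
  proof (rule ccontr)
    assume "\<not> y1 < ys"
    then have le: "ys \<le> y1" by simp
    then have "gg p m (m-K) ys \<le> 0" using f(4) y1b nm unfolding ys_def by simp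
    then show False
    proof (cases "ys = y1")
      case True then show False using ggpos \<open>gg p m (m-K) ys \<le> 0\<close> by simp
    next
      case False
      then have "ys < y1" using le by simp
      then show False using single_crossing[OF p rm _ _ _ \<open>gg p m (m-K) ys \<le> 0\<close>] f(2) ggpos y1b
        unfolding ys_def by fastforce
    qed
  qed
  have ys0: "0 < sym_eq p B n False" using gt y1b unfolding ys_def by simp
  have ysb: "ys \<le> 1" using f(3) unfolding ys_def by simp
  have R: "R p B n = Hi m (m-K) (p + (1-p)*ys) * (p * (p + (1-p)*ys) + (1-p) * ((1-p) + p*ys)) / (2*p)"
    using interior_R(3)[OF p B ys0] nm unfolding ys_def by simp
  define S where "S = p * (p + (1-p)*ys) + (1-p) * ((1-p) + p*ys)"
  have S: "1 - 4*p*(1-p)*real K/real m \<le> S" "0 \<le> S"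
  proof -
    have "S = 1 - 2*p*(1-p)*(1-ys)" unfolding S_def by (simp add: algebra_simps power2_eq_square)
    moreover have "2*p*(1-p)*(1-ys) \<le> 2*p*(1-p)*e" using gt p unfolding y1_def by (intro mult_left_mono) auto
    moreover have "2*p*(1-p)*e = 4*p*(1-p)*real K/real m" unfolding e_def by simp
    ultimately show "1 - 4*p*(1-p)*real K/real m \<le> S" by linarith
    have "0 \<le> p * (p + (1-p)*ys)" "0 \<le> (1-p) * ((1-p) + p*ys)" using p gt y1b by auto
    then show "0 \<le> S" unfolding S_def by simp
  qed
  have Hmono: "Hi m (m-K) q1 \<le> Hi m (m-K) (p + (1-p)*ys)"
  proof (rule Hi_mono[OF rm qb(1)])
    show "q1 \<le> p + (1-p)*ys" unfolding q1_def using gt p by (intro add_left_mono mult_left_mono) auto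
    have "(1-p)*ys \<le> (1-p)*1" using ysb p by (intro mult_left_mono) auto
    then show "p + (1-p)*ys \<le> 1" by simp
  qed
  have a1: "0 \<le> 1 - a"
  proof -
    have "0 \<le> p * c" unfolding c_def using p by simp
    then have "0 < (1-p)*(1-a)" using cond by linarith
    then show ?thesis using p by (simp add: zero_less_mult_iff)
  qed
  have "(1 - a) * (1 - 4*p*(1-p)*real K/real m) \<le> (1 - a) * S" using S a1 by (intro mult_left_mono) auto
  also have "\<dots> \<le> Hi m (m-K) (p + (1-p)*ys) * S" using H1 Hmono S(2) by (intro mult_right_mono) auto
  finally have "(1 - a) * (1 - 4*p*(1-p)*real K/real m) / (2*p) \<le> Hi m (m-K) (p + (1-p)*ys) * S / (2*p)"
    using p by (intro divide_right_mono) auto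
  then show ?thesis using R unfolding S_def B_def n_def by simp
qed

theorem theorem3:
  fixes p :: real
  assumes "1/2 < p" and "p < 1"
  shows "(\<lambda>n. Max ((\<lambda>B. R p B n) ` {1..n})) \<longlonglongrightarrow> 1 / (2 * p)"
proof (rule LIMSEQ_I)
  note p = assms
  fix \<epsilon> :: real assume \<epsilon>: "0 < \<epsilon>"
  define \<delta> where "\<delta> = 2*p - 1"
  have d0: "0 < \<delta>" using p unfolding \<delta>_def by simp
  define c1 where "c1 = 2*(1-p)/\<delta>^2"
  define c0 where "c0 = 2*p/\<delta>^2"
  have c1: "0 \<le> c1" and c0: "0 \<le> c0" using p unfolding c1_def c0_def by auto
  obtain K :: nat where K: "max (max (((1-p)*c1 + p*c0)/(1-p)) (2*c1/(p*\<epsilon>))) 1 < real K"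
    using reals_Archimedean2 by blast
  have K1: "1 \<le> K" and Ka: "((1-p)*c1 + p*c0)/(1-p) < real K" and Kb: "2*c1/(p*\<epsilon>) < real K"
    using K by auto
  have Kpos: "0 < real K" using K1 by simp
  define a where "a = 2*(1-p)/((2*p-1)^2 * real K)"
  define c where "c = 2*p/((2*p-1)^2 * real K)"
  have ac: "a = c1 / real K" "c = c0 / real K" unfolding a_def c_def c1_def c0_def \<delta>_def by simp_all
  have cond: "p * c < (1-p) * (1 - a)"
  proof -
    have "(1-p)*c1 + p*c0 < (1-p) * real K" using Ka p by (simp add: field_simps)
    then have "(p*c0) / real K < ((1-p)*real K - (1-p)*c1) / real K" using Kpos by (intro divide_strict_right_mono) auto
    moreover have "p*c = (p*c0)/real K" "(1-p)*(1-a) = ((1-p)*real K - (1-p)*c1)/real K"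
      using Kpos unfolding ac by (simp_all add: field_simps)
    ultimately show ?thesis by simp
  qed
  have aeps: "a \<le> p*\<epsilon>/2"
  proof -
    have "2*c1 < real K * (p*\<epsilon>)" using Kb p \<epsilon> by (simp add: field_simps)
    then show ?thesis unfolding ac using Kpos by (simp add: field_simps)
  qed
  have a0: "0 \<le> a" unfolding ac using c1 Kpos by simp
  obtain N :: nat where N: "2*real K + 8*(1-p)*real K/\<epsilon> < real N"
    using reals_Archimedean2 by blast
  show "\<exists>no. \<forall>n\<ge>no. norm (Max ((\<lambda>B. R p B n) ` {1..n}) - 1 / (2 * p)) < \<epsilon>"
  proof (intro exI allI impI)
    fix n assume n: "Suc N \<le> n"
    define m where "m = n - 1"
    have nm: "n = Suc m" using n unfolding m_def by simp
    have mN: "real N \<le> real m" using n unfolding m_def by simp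
    have m2K: "2*K \<le> m"
    proof -
      have "0 \<le> 8*(1-p)*real K/\<epsilon>" using p \<epsilon> by simp
      then have "2*real K < real m" using N mN by linarith
      then show ?thesis by linarith
    qed
    have m0: "0 < real m" using m2K K1 by simp
    define b where "b = 4*p*(1-p)*real K/real m"
    have b0: "0 \<le> b" unfolding b_def using p by simp
    have beps: "b \<le> p*\<epsilon>/2"
    proof -
      have "8*(1-p)*real K/\<epsilon> < real m" using N mN by linarith
      then have "8*(1-p)*real K < real m * \<epsilon>" using \<epsilon> by (simp add: field_simps)
      then have "p * (8*(1-p)*real K) \<le> p * (real m * \<epsilon>)" using p by (intro mult_left_mono) auto
      then show ?thesis unfolding b_def using m0 by (simp add: field_simps)
    qed
    have low: "(1 - a) * (1 - b) / (2*p) \<le> R p (Suc m - K) (Suc m)"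
      using R_lower[OF p K1 m2K] cond unfolding a_def c_def b_def by simp
    have "1/(2*p) - \<epsilon>/2 \<le> (1 - a) * (1 - b) / (2*p)"
    proof -
      have "(1 - a) * (1 - b) = 1 - a - b + a*b" by (simp add: algebra_simps)
      also have "\<dots> \<ge> 1 - p*\<epsilon>" using aeps beps mult_nonneg_nonneg[OF a0 b0] by linarith
      finally have "1 - p*\<epsilon> \<le> (1 - a) * (1 - b)" .
      then have "(1 - p*\<epsilon>)/(2*p) \<le> (1 - a) * (1 - b) / (2*p)" using p by (intro divide_right_mono) auto
      moreover have "(1 - p*\<epsilon>)/(2*p) = 1/(2*p) - \<epsilon>/2" using p by (simp add: field_simps)
      ultimately show ?thesis by simp
    qed
    define S where "S = (\<lambda>B. R p B n) ` {1..n}"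
    have fin: "finite S" "S \<noteq> {}" unfolding S_def using n by auto
    have mem: "R p (Suc m - K) (Suc m) \<in> S" unfolding S_def nm using m2K K1 by auto
    have ge: "1/(2*p) - \<epsilon>/2 \<le> Max S"
      using Max_ge[OF fin(1) mem] low \<open>1/(2*p) - \<epsilon>/2 \<le> (1 - a) * (1 - b) / (2*p)\<close> by simp
    have le: "Max S \<le> 1/(2*p)"
    proof (rule Max.boundedI[OF fin])
      fix x assume "x \<in> S"
      then obtain B where "B \<in> {1..n}" "x = R p B n" unfolding S_def by auto
      then show "x \<le> 1/(2*p)" using R_upper[OF p] by auto
    qed
    show "norm (Max ((\<lambda>B. R p B n) ` {1..n}) - 1 / (2 * p)) < \<epsilon>"
      using ge le \<epsilon> unfolding S_def[symmetric] by simp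
  qed
qed

end
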